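(* Let $k$ be a complete non-archimedean valued field of characteristic $p > 0$, and let $r = (r_1,\ldots,r_n)$ be a tuple of positive real numbers. If $[k : k^p] < \infty$, where $k^p:=\{a^p\mid a\in k\}$, then $\Omega_{k\{r^{-1}T\}/k[T]} = 0$.
   Context: $k\{r^{-1}T\} = k\{r_1^{-1}T_1,\ldots,r_n^{-1}T_n\}$ is the Banach $k$-algebra of power series $\sum_{\nu\in\mathbb{Z}_{\ge0}^n} a_\nu T^\nu$, $a_\nu\in k$, with $|a_\nu| r^\nu \to 0$; $k[T]=k[T_1,\ldots,T_n]$. $\Omega_{k\{r^{-1}T\}/k[T]}$ is the module of Kähler differentials. *)

theory Defs
  imports Complex_Main "HOL-Algebra.Ring"
begin

definition nonarch_abs :: "('a::field \<Rightarrow> real) \<Rightarrow> bool" where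
  "nonarch_abs v \<longleftrightarrow>
     (\<forall>x. v x \<ge> 0) \<and> (\<forall>x. v x = 0 \<longleftrightarrow> x = 0) \<and>
     (\<forall>x y. v (x * y) = v x * v y) \<and>
     (\<forall>x y. v (x + y) \<le> max (v x) (v y))"

definition abs_complete :: "('a::field \<Rightarrow> real) \<Rightarrow> bool" where
  "abs_complete v \<longleftrightarrow>
     (\<forall>X :: nat \<Rightarrow> 'a.
        (\<forall>e>0. \<exists>N. \<forall>m\<ge>N. \<forall>n\<ge>N. v (X m - X n) < e) \<longrightarrow>
        (\<exists>L. (\<lambda>n. v (X n - L)) \<longlonglongrightarrow> 0))"

text \<open>\<open>[k : k^p] < \<infinity>\<close>: k is spanned, as a vector space over the subfield
  \<open>k^p = {a^p | a \<in> k}\<close>, by a finite set.\<close>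
definition finite_p_degree :: "'a::field itself \<Rightarrow> nat \<Rightarrow> bool" where
  "finite_p_degree _ p \<longleftrightarrow>
     (\<exists>B :: 'a set. finite B \<and> (\<forall>x::'a. \<exists>c. x = (\<Sum>b\<in>B. (c b) ^ p * b)))"

text \<open>Power series in variables indexed by the finite type \<open>'n\<close>: maps from
  multi-indices \<open>'n \<Rightarrow> nat\<close> to coefficients.\<close>
type_synonym ('n, 'a) pser = "('n \<Rightarrow> nat) \<Rightarrow> 'a"

definition pser_mult :: "('n::finite, 'a::field) pser \<Rightarrow> ('n, 'a) pser \<Rightarrow> ('n, 'a) pser" where
  "pser_mult f g = (\<lambda>\<nu>. \<Sum>\<mu>\<in>{\<mu>. \<forall>i. \<mu> i \<le> \<nu> i}. f \<mu> * g (\<lambda>i. \<nu> i - \<mu> i))"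

text \<open>The ring \<open>k{r^{-1}T}\<close>: power series \<open>\<Sum> a_\<nu> T^\<nu>\<close> with \<open>|a_\<nu>| r^\<nu> \<rightarrow> 0\<close>
  (along the cofinite filter on multi-indices).\<close>
definition tate_ring :: "('a::field \<Rightarrow> real) \<Rightarrow> ('n::finite \<Rightarrow> real) \<Rightarrow> ('n, 'a) pser ring" where
  "tate_ring v r = \<lparr>
     carrier = {f. ((\<lambda>\<nu>. v (f \<nu>) * (\<Prod>i\<in>UNIV. r i ^ \<nu> i)) \<longlongrightarrow> 0) cofinite},
     mult = pser_mult,
     one = (\<lambda>\<nu>. if \<nu> = (\<lambda>_. 0) then 1 else 0),
     zero = (\<lambda>_. 0),
     add = (\<lambda>f g \<nu>. f \<nu> + g \<nu>) \<rparr>"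

text \<open>The polynomial subring \<open>k[T]\<close>: finitely supported coefficient families.\<close>
definition poly_set :: "('n::finite, 'a::field) pser set" where
  "poly_set = {f. finite {\<nu>. f \<nu> \<noteq> 0}}"

text \<open>\<open>\<Omega>_{A/S}\<close> is presented as the free A-module on symbols \<open>dx\<close> (x in A)
  modulo the A-submodule generated by \<open>d(x+y) - dx - dy\<close>, \<open>d(xy) - x dy - y dx\<close>
  and \<open>ds\<close> (s in S). Elements of the free module are finitely supported
  maps \<open>A \<Rightarrow> A\<close>; \<open>fdelta R x\<close> is the basis element \<open>dx\<close>.\<close>

definition fdelta :: "('a, 'b) ring_scheme \<Rightarrow> 'a \<Rightarrow> ('a \<Rightarrow> 'a)" where
  "fdelta R x = (\<lambda>y. if y = x then \<one>\<^bsub>R\<^esub> else \<zero>\<^bsub>R\<^esub>)"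

definition fadd :: "('a, 'b) ring_scheme \<Rightarrow> ('a \<Rightarrow> 'a) \<Rightarrow> ('a \<Rightarrow> 'a) \<Rightarrow> ('a \<Rightarrow> 'a)" where
  "fadd R u w = (\<lambda>y. u y \<oplus>\<^bsub>R\<^esub> w y)"

definition fsub :: "('a, 'b) ring_scheme \<Rightarrow> ('a \<Rightarrow> 'a) \<Rightarrow> ('a \<Rightarrow> 'a) \<Rightarrow> ('a \<Rightarrow> 'a)" where
  "fsub R u w = (\<lambda>y. u y \<ominus>\<^bsub>R\<^esub> w y)"

definition fsmult :: "('a, 'b) ring_scheme \<Rightarrow> 'a \<Rightarrow> ('a \<Rightarrow> 'a) \<Rightarrow> ('a \<Rightarrow> 'a)" where
  "fsmult R a u = (\<lambda>y. a \<otimes>\<^bsub>R\<^esub> u y)"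

inductive_set kahler_rel :: "('a, 'b) ring_scheme \<Rightarrow> 'a set \<Rightarrow> ('a \<Rightarrow> 'a) set"
  for R :: "('a, 'b) ring_scheme" and S :: "'a set" where
  zero: "(\<lambda>_. \<zero>\<^bsub>R\<^esub>) \<in> kahler_rel R S"
| add_rel: "x \<in> carrier R \<Longrightarrow> y \<in> carrier R \<Longrightarrow>
     fsub R (fdelta R (x \<oplus>\<^bsub>R\<^esub> y)) (fadd R (fdelta R x) (fdelta R y)) \<in> kahler_rel R S"
| mult_rel: "x \<in> carrier R \<Longrightarrow> y \<in> carrier R \<Longrightarrow>
     fsub R (fdelta R (x \<otimes>\<^bsub>R\<^esub> y))
       (fadd R (fsmult R x (fdelta R y)) (fsmult R y (fdelta R x))) \<in> kahler_rel R S"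
| base_rel: "s \<in> S \<Longrightarrow> fdelta R s \<in> kahler_rel R S"
| sum: "u \<in> kahler_rel R S \<Longrightarrow> w \<in> kahler_rel R S \<Longrightarrow> fadd R u w \<in> kahler_rel R S"
| smult: "a \<in> carrier R \<Longrightarrow> u \<in> kahler_rel R S \<Longrightarrow> fsmult R a u \<in> kahler_rel R S"

text \<open>\<open>\<Omega>_{A/S} = 0\<close>: the quotient of the free module by the relation submodule is
  trivial, i.e. every generator \<open>dx\<close> lies in the relation submodule.\<close>
definition kahler_zero :: "('a, 'b) ring_scheme \<Rightarrow> 'a set \<Rightarrow> bool" where
  "kahler_zero R S \<longleftrightarrow> (\<forall>x\<in>carrier R. fdelta R x \<in> kahler_rel R S)"

end

theory Submission
  imports Defs "HOL-Computational_Algebra.Primes"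
begin


section \<open>Absolute value basics\<close>

lemma nav_ge0: "nonarch_abs v \<Longrightarrow> v x \<ge> 0"
  by (simp add: nonarch_abs_def)

lemma nav_eq0: "nonarch_abs v \<Longrightarrow> v x = 0 \<longleftrightarrow> x = 0"
  by (simp add: nonarch_abs_def)

lemma nav_mult: "nonarch_abs v \<Longrightarrow> v (x * y) = v x * v y"
  by (simp add: nonarch_abs_def)

lemma nav_max: "nonarch_abs v \<Longrightarrow> v (x + y) \<le> max (v x) (v y)"
  by (simp add: nonarch_abs_def)

lemma nav_0: "nonarch_abs v \<Longrightarrow> v 0 = 0"
  by (simp add: nonarch_abs_def)

lemma nav_1: assumes "nonarch_abs v" shows "v (1::'a::field) = 1"
proof -
  have "v 1 = v 1 * v (1::'a)" using nav_mult[OF assms, of 1 1] by simp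
  moreover have "v (1::'a) \<noteq> 0" using nav_eq0[OF assms] by simp
  ultimately show ?thesis by simp
qed

lemma nav_minus: assumes "nonarch_abs v" shows "v (- x) = v (x::'a::field)"
proof -
  have "v (-1) * v (-1) = (1::real)"
    using nav_mult[OF assms, of "-1::'a" "-1"] nav_1[OF assms] by simp
  moreover have "v (-1::'a) \<ge> 0" using nav_ge0[OF assms] .
  ultimately have "v (-1::'a) = 1"
    by (metis power2_eq_square abs_of_nonneg abs_square_eq_1)
  then show ?thesis using nav_mult[OF assms, of "-1" x] by simp
qed

lemma nav_diff_sym: "nonarch_abs v \<Longrightarrow> v (x - y) = v (y - (x::'a::field))"
  by (metis minus_diff_eq nav_minus)

lemma nav_pow: "nonarch_abs v \<Longrightarrow> v (x ^ n) = v x ^ n"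
  by (induction n) (simp_all add: nav_1 nav_mult)

lemma nav_tri: "nonarch_abs v \<Longrightarrow> v (x + y) \<le> v x + v y"
  using nav_max[of v x y] nav_ge0[of v] by (smt (verit))

lemma nav_sum_le: assumes "nonarch_abs v"
  shows "v (sum f K) \<le> (\<Sum>k\<in>K. v (f k))"
proof (induction K rule: infinite_finite_induct)
  case (infinite A) then show ?case using nav_0[OF assms] by simp
next
  case empty then show ?case using nav_0[OF assms] by simp
next
  case (insert x F)
  then show ?case using nav_tri[OF assms, of "f x" "sum f F"] by simp
qed

lemma nav_sum_max: assumes "nonarch_abs v" "\<And>k. k \<in> K \<Longrightarrow> v (f k) \<le> M" "0 \<le> M"
  shows "v (sum f K) \<le> M"
  using assms(2)
proof (induction K rule: infinite_finite_induct)
  case (infinite A) then show ?case using nav_0[OF assms(1)] assms(3) by simp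
next
  case empty then show ?case using nav_0[OF assms(1)] assms(3) by simp
next
  case (insert x F)
  then have a: "v (f x) \<le> M" "v (sum f F) \<le> M" by auto
  have c: "v (f x + sum f F) \<le> max (v (f x)) (v (sum f F))" using nav_max[OF assms(1)] .
  have "v (f x + sum f F) \<le> M" using a c by (simp add: max_def split: if_splits)
  then show ?case using insert by simp
qed

lemma nav_sum_less: assumes "nonarch_abs v" "\<And>k. k \<in> K \<Longrightarrow> v (f k) < M" "0 < M"
  shows "v (sum f K) < M"
  using assms(2)
proof (induction K rule: infinite_finite_induct)
  case (infinite A) then show ?case using nav_0[OF assms(1)] assms(3) by simp
next
  case empty then show ?case using nav_0[OF assms(1)] assms(3) by simp
next
  case (insert x F)
  then have a: "v (f x) < M" "v (sum f F) < M" by auto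
  have c: "v (f x + sum f F) \<le> max (v (f x)) (v (sum f F))" using nav_max[OF assms(1)] .
  have "v (f x + sum f F) < M" using a c by (simp add: max_def split: if_splits)
  then show ?case using insert by simp
qed

section \<open>Frobenius on the field\<close>

lemma char_prime: "CHAR('a::field) > 0 \<Longrightarrow> prime CHAR('a)"
  using prime_CHAR_semidom by blast

lemma frob_add: "CHAR('a::field) > 0 \<Longrightarrow> p = CHAR('a) \<Longrightarrow> (x + y :: 'a) ^ p = x ^ p + y ^ p"
  using freshmans_dream char_prime by blast

lemma frob_diff: assumes "CHAR('a::field) > 0" "p = CHAR('a)" shows "(x - y :: 'a) ^ p = x ^ p - y ^ p"
proof -
  have "x ^ p = ((x - y) + y) ^ p" by simp
  also have "\<dots> = (x - y) ^ p + y ^ p" using frob_add[OF assms] by blast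
  finally show ?thesis by simp
qed

lemma frob_sum: "CHAR('a::field) > 0 \<Longrightarrow> p = CHAR('a) \<Longrightarrow> (sum f A :: 'a) ^ p = (\<Sum>i\<in>A. f i ^ p)"
  using freshmans_dream_sum char_prime by blast

section \<open>Spans over p-th powers\<close>

definition pspan :: "nat \<Rightarrow> 'a::field set \<Rightarrow> 'a set" where
  "pspan p B = {a. \<exists>c. a = (\<Sum>b\<in>B. c b ^ p * b)}"

lemma pspanI: "a = (\<Sum>b\<in>B. c b ^ p * b) \<Longrightarrow> a \<in> pspan p B"
  unfolding pspan_def by blast

lemma pspan_add: assumes "CHAR('a::field) > 0" "p = CHAR('a)"
  shows "(\<Sum>b\<in>B. c b ^ p * b) + (\<Sum>b\<in>B. d b ^ p * b) = (\<Sum>b\<in>B. (c b + d b) ^ p * (b::'a))"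
  by (simp add: frob_add[OF assms] sum.distrib distrib_right)

lemma pspan_diff: assumes "CHAR('a::field) > 0" "p = CHAR('a)"
  shows "(\<Sum>b\<in>B. c b ^ p * b) - (\<Sum>b\<in>B. d b ^ p * b) = (\<Sum>b\<in>B. (c b - d b) ^ p * (b::'a))"
  by (simp add: frob_diff[OF assms] sum_subtractf left_diff_distrib)

lemma pspan_scale:
  shows "l ^ p * (\<Sum>b\<in>B. c b ^ p * b) = (\<Sum>b\<in>B. (l * c b) ^ p * (b::'a::field))"
  by (simp add: sum_distrib_left power_mult_distrib mult.assoc)

lemma frob_minus: assumes "CHAR('a::field) > 0" "p = CHAR('a)" shows "(- x :: 'a) ^ p = - (x ^ p)"
  using frob_diff[OF assms, of 0 x] assms by (simp add: power_0_left)

lemma dist_pos: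
  fixes B :: "'a::field set"
  assumes nav: "nonarch_abs v" and cpl: "abs_complete v" and ch: "CHAR('a) > 0"
    and pdef: "p = CHAR('a)" and fin: "finite B"
    and Cpos: "C > 0"
    and IH: "\<forall>a\<in>pspan p B. \<exists>c. a = (\<Sum>b\<in>B. c b ^ p * b) \<and> (\<forall>b\<in>B. v (c b) ^ p \<le> C * v a)"
    and notin: "e \<notin> pspan p B"
  shows "\<exists>\<delta>>0. \<forall>w\<in>pspan p B. \<delta> \<le> v (e - w)"
proof (rule ccontr)
  assume "\<not> ?thesis"
  then have "\<forall>n::nat. \<exists>w\<in>pspan p B. v (e - w) < (1/2)^n"
    by (metis not_le zero_less_divide_1_iff zero_less_numeral zero_less_power)
  then obtain w where w: "\<And>n. w n \<in> pspan p B" "\<And>n. v (e - w n) < (1/2)^n"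
    by metis
  have dn: "v (w (Suc n) - w n) < (1/2)^n" for n
  proof -
    have eq: "w (Suc n) - w n = (e - w n) + (- (e - w (Suc n)))" by simp
    have m: "v (- (e - w (Suc n))) = v (e - w (Suc n))" by (rule nav_minus[OF nav])
    have "v (w (Suc n) - w n) \<le> max (v (e - w n)) (v (e - w (Suc n)))"
      using nav_max[OF nav, of "e - w n" "- (e - w (Suc n))"] by (simp only: eq m)
    moreover have "(1/2::real)^(Suc n) \<le> (1/2)^n" by (rule power_decreasing) auto
    then have "v (e - w (Suc n)) < (1/2)^n"
      using w(2)[of "Suc n"] by linarith
    ultimately show ?thesis using w(2)[of n] by (metis max_less_iff_conj le_less_trans)
  qed
  have "\<forall>n. \<exists>c. w (Suc n) - w n = (\<Sum>b\<in>B. c b ^ p * b) \<and> (\<forall>b\<in>B. v (c b) ^ p \<le> C * v (w (Suc n) - w n))"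
  proof
    fix n
    obtain c1 c2 where "w (Suc n) = (\<Sum>b\<in>B. c1 b ^ p * b)" "w n = (\<Sum>b\<in>B. c2 b ^ p * b)"
      using w(1) unfolding pspan_def by blast
    then have "w (Suc n) - w n = (\<Sum>b\<in>B. (c1 b - c2 b) ^ p * b)"
      using pspan_diff[OF ch pdef] by simp
    then have "w (Suc n) - w n \<in> pspan p B"
      by (rule pspanI)
    then show "\<exists>c. w (Suc n) - w n = (\<Sum>b\<in>B. c b ^ p * b) \<and> (\<forall>b\<in>B. v (c b) ^ p \<le> C * v (w (Suc n) - w n))"
      using IH by blast
  qed
  then obtain c where c: "\<And>n. w (Suc n) - w n = (\<Sum>b\<in>B. c n b ^ p * b)"
    "\<And>n b. b \<in> B \<Longrightarrow> v (c n b) ^ p \<le> C * v (w (Suc n) - w n)"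
    by metis
  have cb: "v (c n b) ^ p \<le> C * (1/2)^n" if "b \<in> B" for n b
    using c(2)[OF that, of n] dn[of n] Cpos
    by (smt (verit) mult_left_mono)
  obtain c0 where c0: "w 0 = (\<Sum>b\<in>B. c0 b ^ p * b)"
    using w(1)[of 0] unfolding pspan_def by blast
  define s where "s N b = c0 b + (\<Sum>k<N. c k b)" for N b
  have ws: "w N = (\<Sum>b\<in>B. s N b ^ p * b)" for N
  proof (induction N)
    case 0 then show ?case using c0 by (simp add: s_def)
  next
    case (Suc N)
    have "w (Suc N) = w N + (w (Suc N) - w N)" by simp
    also have "\<dots> = (\<Sum>b\<in>B. (s N b + c N b) ^ p * b)"
      using Suc c(1)[of N] pspan_add[OF ch pdef] by simp
    also have "\<dots> = (\<Sum>b\<in>B. s (Suc N) b ^ p * b)"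
      by (simp add: s_def add.assoc)
    finally show ?case .
  qed
  have pp: "p > 0" using ch pdef by simp
  have cauchy: "\<forall>\<epsilon>>0. \<exists>N. \<forall>m\<ge>N. \<forall>n\<ge>N. v (s m b - s n b) < \<epsilon>" if b: "b \<in> B" for b
  proof (intro allI impI)
    fix \<epsilon> :: real assume ep: "\<epsilon> > 0"
    obtain N where N: "(1/2::real)^N < \<epsilon>^p / C"
      using real_arch_pow_inv[of "\<epsilon>^p / C" "1/2"] ep Cpos by auto
    have small: "v (c k b) < \<epsilon>" if "k \<ge> N" for k
    proof -
      have "(1/2::real)^k \<le> (1/2)^N" using that by (simp add: power_decreasing)
      then have h1: "C * (1/2)^k \<le> C * (1/2::real)^N" using Cpos by (simp add: mult_left_mono)
      have h2: "C * (1/2::real)^N < \<epsilon>^p" using N Cpos by (simp add: pos_less_divide_eq mult.commute)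
      have "v (c k b) ^ p \<le> C * (1/2)^k" by (rule cb[OF b])
      then have "v (c k b) ^ p < \<epsilon>^p" using h1 h2 by linarith
      then show ?thesis using ep by (meson less_imp_le power_less_imp_less_base)
    qed
    have diff: "v (s m b - s n b) < \<epsilon>" if "N \<le> n" "n \<le> m" for m n
    proof -
      have "(\<Sum>k<m. c k b) = (\<Sum>k<n. c k b) + (\<Sum>k\<in>{n..<m}. c k b)"
        unfolding lessThan_atLeast0 using sum.atLeastLessThan_concat[OF le0 that(2), of "\<lambda>k. c k b"]
        by simp
      then have "s m b - s n b = (\<Sum>k\<in>{n..<m}. c k b)"
        unfolding s_def by simp
      moreover have "v (\<Sum>k\<in>{n..<m}. c k b) < \<epsilon>"
        by (rule nav_sum_less[OF nav _ ep]) (use small that in auto)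
      ultimately show ?thesis by simp
    qed
    show "\<exists>N. \<forall>m\<ge>N. \<forall>n\<ge>N. v (s m b - s n b) < \<epsilon>"
    proof (intro exI[of _ N] allI impI)
      fix m n assume "m \<ge> N" "n \<ge> N"
      show "v (s m b - s n b) < \<epsilon>"
      proof (cases "n \<le> m")
        case True then show ?thesis using diff[of n m] \<open>n \<ge> N\<close> by simp
      next
        case False
        then have "v (s n b - s m b) < \<epsilon>" using diff[of m n] \<open>m \<ge> N\<close> by simp
        then show ?thesis using nav_diff_sym[OF nav, of "s m b" "s n b"] by simp
      qed
    qed
  qed
  have "\<forall>b\<in>B. \<exists>L. (\<lambda>N. v (s N b - L)) \<longlonglongrightarrow> 0"
  proof
    fix b assume b: "b \<in> B"
    have "\<forall>X. (\<forall>e>0. \<exists>N. \<forall>m\<ge>N. \<forall>n\<ge>N. v (X m - X n) < e) \<longrightarrow>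
        (\<exists>L. (\<lambda>n. v (X n - L)) \<longlonglongrightarrow> 0)" using cpl unfolding abs_complete_def .
    then have "(\<forall>e>0. \<exists>N. \<forall>m\<ge>N. \<forall>n\<ge>N. v (s m b - s n b) < e) \<longrightarrow>
        (\<exists>L. (\<lambda>n. v (s n b - L)) \<longlonglongrightarrow> 0)" by (rule spec)
    then show "\<exists>L. (\<lambda>N. v (s N b - L)) \<longlonglongrightarrow> 0" using cauchy[OF b] by blast
  qed
  then obtain L where L: "\<And>b. b \<in> B \<Longrightarrow> (\<lambda>N. v (s N b - L b)) \<longlonglongrightarrow> 0"
    by metis
  define E where "E = (\<Sum>b\<in>B. L b ^ p * b)"
  have lim: "(\<lambda>N. (1/2::real)^N + (\<Sum>b\<in>B. v (s N b - L b) ^ p * v b)) \<longlonglongrightarrow> 0"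
  proof -
    have "(\<lambda>N. (\<Sum>b\<in>B. v (s N b - L b) ^ p * v b)) \<longlonglongrightarrow> (\<Sum>b\<in>B. 0 ^ p * v b)"
      by (intro tendsto_sum tendsto_mult tendsto_power L tendsto_const)
    moreover have p1: "(\<lambda>N. (1/2::real)^N) \<longlonglongrightarrow> 0" by (rule LIMSEQ_power_zero) simp
    ultimately have "(\<lambda>N. (1/2::real)^N + (\<Sum>b\<in>B. v (s N b - L b) ^ p * v b)) \<longlonglongrightarrow> 0 + (\<Sum>b\<in>B. 0 ^ p * v b)"
      using tendsto_add[OF p1] by blast
    moreover have "(\<Sum>b\<in>B. (0::real) ^ p * v b) = 0" using pp by (simp add: power_0_left)
    ultimately show ?thesis by simp
  qed
  have bound: "v (e - E) \<le> (1/2::real)^N + (\<Sum>b\<in>B. v (s N b - L b) ^ p * v b)" for N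
  proof -
    have "w N - E = (\<Sum>b\<in>B. (s N b - L b) ^ p * b)"
      unfolding ws E_def using pspan_diff[OF ch pdef] by simp
    then have "v (w N - E) \<le> (\<Sum>b\<in>B. v (s N b - L b) ^ p * v b)"
      using nav_sum_le[OF nav, of "\<lambda>b. (s N b - L b) ^ p * b" B]
      by (simp add: nav_mult[OF nav] nav_pow[OF nav])
    moreover have "v (e - E) \<le> v (e - w N) + v (w N - E)"
      using nav_tri[OF nav, of "e - w N" "w N - E"] by simp
    ultimately show ?thesis using w(2)[of N] by simp
  qed
  have "v (e - E) \<le> 0"
    by (rule LIMSEQ_le_const[OF lim]) (use bound in auto)
  then have "e = E" using nav_ge0[OF nav, of "e - E"] nav_eq0[OF nav, of "e - E"] by simp
  then have "e \<in> pspan p B" unfolding E_def by (rule pspanI)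
  with notin show False by simp
qed


lemma rep_bound:
  fixes B :: "'a::field set"
  assumes nav: "nonarch_abs v" and cpl: "abs_complete v" and ch: "CHAR('a) > 0"
    and pdef: "p = CHAR('a)" and fin: "finite B"
  shows "\<exists>C>0. \<forall>a\<in>pspan p B. \<exists>c. a = (\<Sum>b\<in>B. c b ^ p * b) \<and> (\<forall>b\<in>B. v (c b) ^ p \<le> C * v a)"
  using fin
proof (induction B rule: finite_induct)
  case empty
  have "pspan p {} = {0::'a}" by (simp add: pspan_def)
  then show ?case by (intro exI[of _ 1]) auto
next
  case (insert e B)
  have pp: "p > 0" using ch pdef by simp
  obtain C where C: "C > 0"
    "\<forall>a\<in>pspan p B. \<exists>c. a = (\<Sum>b\<in>B. c b ^ p * b) \<and> (\<forall>b\<in>B. v (c b) ^ p \<le> C * v a)"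
    using insert.IH by blast
  have split: "(\<Sum>b\<in>insert e B. c b ^ p * b) = c e ^ p * e + (\<Sum>b\<in>B. c b ^ p * b)" for c
    using insert.hyps by simp
  have upd: "(\<Sum>b\<in>B. (c(e := x)) b ^ p * b) = (\<Sum>b\<in>B. c b ^ p * b)" for c x
    using insert.hyps(2) by (intro sum.cong) auto
  show ?case
  proof (cases "e \<in> pspan p B")
    case True
    then obtain ce where ce: "e = (\<Sum>b\<in>B. ce b ^ p * b)" unfolding pspan_def by blast
    show ?thesis
    proof (intro exI[of _ C] conjI ballI C(1))
      fix a assume "a \<in> pspan p (insert e B)"
      then obtain c where a: "a = (\<Sum>b\<in>insert e B. c b ^ p * b)" unfolding pspan_def by blast
      have "a = c e ^ p * (\<Sum>b\<in>B. ce b ^ p * b) + (\<Sum>b\<in>B. c b ^ p * b)"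
        using a split ce by simp
      also have "\<dots> = (\<Sum>b\<in>B. (c e * ce b + c b) ^ p * b)"
        by (simp only: pspan_scale pspan_add[OF ch pdef])
      finally have "a \<in> pspan p B" by (rule pspanI)
      then obtain c' where c': "a = (\<Sum>b\<in>B. c' b ^ p * b)" "\<forall>b\<in>B. v (c' b) ^ p \<le> C * v a"
        using C(2) by blast
      have "a = (\<Sum>b\<in>insert e B. (c'(e := 0)) b ^ p * b)"
        unfolding split upd using c'(1) pp by (simp add: power_0_left)
      moreover have "\<forall>b\<in>insert e B. v ((c'(e := 0)) b) ^ p \<le> C * v a"
        using c'(2) insert.hyps(2) pp C(1) nav_0[OF nav] nav_ge0[OF nav, of a]
        by (auto simp: power_0_left)
      ultimately show "\<exists>c. a = (\<Sum>b\<in>insert e B. c b ^ p * b) \<and> (\<forall>b\<in>insert e B. v (c b) ^ p \<le> C * v a)"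
        by blast
    qed
  next
    case False
    obtain \<delta> where d: "\<delta> > 0" "\<forall>w\<in>pspan p B. \<delta> \<le> v (e - w)"
      using dist_pos[OF nav cpl ch pdef insert.hyps(1) C(1) C(2) False] by blast
    define K where "K = max 1 (v e / \<delta>)"
    define C' where "C' = max (1 / \<delta>) (C * K)"
    have K: "K \<ge> 1" unfolding K_def by simp
    have C': "C' > 0" unfolding C'_def using d(1) by (simp add: less_max_iff_disj)
    show ?thesis
    proof (intro exI[of _ C'] conjI ballI C')
      fix a assume "a \<in> pspan p (insert e B)"
      then obtain c where a: "a = (\<Sum>b\<in>insert e B. c b ^ p * b)" unfolding pspan_def by blast
      define l where "l = c e"
      define w where "w = (\<Sum>b\<in>B. c b ^ p * b)"
      have aw: "a = l ^ p * e + w" unfolding a split l_def w_def ..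
      have wsp: "w \<in> pspan p B" unfolding w_def by (rule pspanI) (rule refl)
      have va: "v a \<ge> 0" by (rule nav_ge0[OF nav])
      have lb: "v l ^ p \<le> (1 / \<delta>) * v a"
      proof (cases "l = 0")
        case True then show ?thesis using pp va d nav_0[OF nav] by (simp add: power_0_left)
      next
        case False
        define w' where "w' = (- inverse l) ^ p * w"
        have "w' \<in> pspan p B" unfolding w'_def w_def pspan_scale by (rule pspanI) (rule refl)
        then have de: "\<delta> \<le> v (e - w')" using d(2) by blast
        have "(- inverse l) ^ p = - (inverse l ^ p)" by (rule frob_minus[OF ch pdef])
        then have "l ^ p * (e - w') = l ^ p * e + w"
          unfolding w'_def using False
          by (simp add: algebra_simps power_inverse[symmetric] power_mult_distrib[symmetric])
        then have "v a = v l ^ p * v (e - w')"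
          using aw nav_mult[OF nav] nav_pow[OF nav] by metis
        moreover have "v l ^ p * \<delta> \<le> v l ^ p * v (e - w')"
          using de nav_ge0[OF nav, of l] by (simp add: mult_left_mono)
        ultimately have "v l ^ p * \<delta> \<le> v a" by simp
        then show ?thesis using d(1) by (simp add: pos_le_divide_eq mult.commute)
      qed
      have vw: "v w \<le> K * v a"
      proof -
        have "w = a + (- (l ^ p * e))" using aw by simp
        then have "v w \<le> max (v a) (v (l ^ p * e))"
          using nav_max[OF nav, of a "- (l ^ p * e)"] nav_minus[OF nav, of "l ^ p * e"] by simp
        moreover have "v (l ^ p * e) \<le> (v e / \<delta>) * v a"
        proof -
          have "v (l ^ p * e) = v l ^ p * v e" by (simp add: nav_mult[OF nav] nav_pow[OF nav])
          also have "\<dots> \<le> ((1 / \<delta>) * v a) * v e"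
            using lb nav_ge0[OF nav, of e] by (rule mult_right_mono)
          finally show ?thesis by (simp add: mult.commute)
        qed
        moreover have "v a \<le> K * v a" using K va by (simp add: mult_le_cancel_right1)
        moreover have "(v e / \<delta>) * v a \<le> K * v a"
          by (rule mult_right_mono[OF _ va]) (simp add: K_def)
        ultimately show ?thesis by simp
      qed
      obtain c' where c': "w = (\<Sum>b\<in>B. c' b ^ p * b)" "\<forall>b\<in>B. v (c' b) ^ p \<le> C * v w"
        using C(2) wsp by blast
      have "a = (\<Sum>b\<in>insert e B. (c'(e := l)) b ^ p * b)"
        unfolding split upd using c'(1) aw by simp
      moreover have "\<forall>b\<in>insert e B. v ((c'(e := l)) b) ^ p \<le> C' * v a"
      proof
        fix b assume b: "b \<in> insert e B"
        show "v ((c'(e := l)) b) ^ p \<le> C' * v a"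
        proof (cases "b = e")
          case True
          have "(1/\<delta>) * v a \<le> C' * v a"
            by (rule mult_right_mono[OF _ va]) (simp add: C'_def)
          then show ?thesis using True lb by simp
        next
          case False
          then have bB: "b \<in> B" using b by simp
          have "v (c' b) ^ p \<le> C * v w" using c'(2) bB by blast
          also have "\<dots> \<le> C * (K * v a)" using vw C(1) by (simp add: mult_left_mono)
          also have "\<dots> = (C * K) * v a" by simp
          also have "\<dots> \<le> C' * v a"
            by (rule mult_right_mono[OF _ va]) (simp add: C'_def)
          finally show ?thesis using False by simp
        qed
      qed
      ultimately show "\<exists>c. a = (\<Sum>b\<in>insert e B. c b ^ p * b) \<and> (\<forall>b\<in>insert e B. v (c b) ^ p \<le> C' * v a)"
        by blast
    qed
  qed
qed




definition LE :: "('n \<Rightarrow> nat) \<Rightarrow> ('n \<Rightarrow> nat) set" where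
  "LE \<nu> = {\<mu>. \<forall>i. \<mu> i \<le> \<nu> i}"

lemma finite_LE: "finite (LE (\<nu> :: 'n::finite \<Rightarrow> nat))"
proof -
  have M: "\<nu> i \<le> Max (range \<nu>)" for i by (rule Max_ge) auto
  have "LE \<nu> \<subseteq> {f. \<forall>x. (x \<in> UNIV \<longrightarrow> f x \<in> {..Max (range \<nu>)}) \<and> (x \<notin> UNIV \<longrightarrow> f x = 0)}"
    unfolding LE_def using M le_trans by blast
  moreover have "finite {f. \<forall>x. (x \<in> (UNIV::'n set) \<longrightarrow> f x \<in> {..Max (range \<nu>)}) \<and> (x \<notin> UNIV \<longrightarrow> f x = (0::nat))}"
    by (rule finite_set_of_finite_funs) auto
  ultimately show ?thesis by (rule finite_subset)
qed

lemma pser_mult_LE: "pser_mult f g \<nu> = (\<Sum>\<mu>\<in>LE \<nu>. f \<mu> * g (\<lambda>i. \<nu> i - \<mu> i))"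
  by (simp add: pser_mult_def LE_def)

lemma pser_mult_comm: "pser_mult f g = pser_mult (g :: ('n::finite, 'a::field) pser) f"
proof
  fix \<nu>
  show "pser_mult f g \<nu> = pser_mult g f \<nu>"
    unfolding pser_mult_LE
    by (rule sum.reindex_bij_witness[where i="\<lambda>\<mu> i. \<nu> i - \<mu> i" and j="\<lambda>\<mu> i. \<nu> i - \<mu> i"])
       (auto simp: LE_def fun_eq_iff mult.commute diff_diff_cancel)
qed

lemma pser_mult_assoc:
  "pser_mult (pser_mult f g) h = pser_mult f (pser_mult g (h :: ('n::finite, 'a::field) pser))"
proof
  fix \<nu> :: "'n \<Rightarrow> nat"
  have "pser_mult (pser_mult f g) h \<nu> =
        (\<Sum>\<mu>\<in>LE \<nu>. \<Sum>\<alpha>\<in>LE \<mu>. f \<alpha> * g (\<lambda>i. \<mu> i - \<alpha> i) * h (\<lambda>i. \<nu> i - \<mu> i))"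
    unfolding pser_mult_LE by (simp add: sum_distrib_right)
  also have "\<dots> = (\<Sum>(\<mu>,\<alpha>)\<in>Sigma (LE \<nu>) LE. f \<alpha> * g (\<lambda>i. \<mu> i - \<alpha> i) * h (\<lambda>i. \<nu> i - \<mu> i))"
    by (rule sum.Sigma) (auto simp: finite_LE)
  also have "\<dots> = (\<Sum>(\<alpha>,\<beta>)\<in>Sigma (LE \<nu>) (\<lambda>\<alpha>. LE (\<lambda>i. \<nu> i - \<alpha> i)).
                      f \<alpha> * g \<beta> * h (\<lambda>i. \<nu> i - \<alpha> i - \<beta> i))"
    by (rule sum.reindex_bij_witness[where i="\<lambda>(\<alpha>,\<beta>). (\<lambda>i. \<alpha> i + \<beta> i, \<alpha>)"
                                       and j="\<lambda>(\<mu>,\<alpha>). (\<alpha>, \<lambda>i. \<mu> i - \<alpha> i)"])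
       (clarsimp simp: LE_def fun_eq_iff; (metis order_trans diff_le_mono add.commute le_diff_conv2 le_add_diff_inverse)?)+
  also have "\<dots> = (\<Sum>\<alpha>\<in>LE \<nu>. \<Sum>\<beta>\<in>LE (\<lambda>i. \<nu> i - \<alpha> i). f \<alpha> * g \<beta> * h (\<lambda>i. \<nu> i - \<alpha> i - \<beta> i))"
    by (rule sum.Sigma[symmetric]) (auto simp: finite_LE)
  also have "\<dots> = pser_mult f (pser_mult g h) \<nu>"
    unfolding pser_mult_LE by (simp add: sum_distrib_left mult.assoc)
  finally show "pser_mult (pser_mult f g) h \<nu> = pser_mult f (pser_mult g h) \<nu>" .
qed

lemma pser_mult_add_left:
  "pser_mult (\<lambda>\<nu>. f \<nu> + g \<nu>) h = (\<lambda>\<nu>. pser_mult f h \<nu> + pser_mult g (h :: ('n::finite, 'a::field) pser) \<nu>)"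
  by (simp add: pser_mult_LE fun_eq_iff sum.distrib distrib_right)

lemma pser_mult_add_right:
  "pser_mult h (\<lambda>\<nu>. f \<nu> + g \<nu>) = (\<lambda>\<nu>. pser_mult h f \<nu> + pser_mult h (g :: ('n::finite, 'a::field) pser) \<nu>)"
  by (simp add: pser_mult_LE fun_eq_iff sum.distrib distrib_left)

lemma pser_mult_diff_right:
  "pser_mult h (\<lambda>\<nu>. f \<nu> - g \<nu>) = (\<lambda>\<nu>. pser_mult h f \<nu> - pser_mult h (g :: ('n::finite, 'a::field) pser) \<nu>)"
  by (simp add: pser_mult_LE fun_eq_iff sum_subtractf right_diff_distrib)

lemma pser_mult_scal_right:
  "pser_mult h (\<lambda>\<nu>. c * f \<nu>) = (\<lambda>\<nu>. c * pser_mult h (f :: ('n::finite, 'a::field) pser) \<nu>)"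
  by (simp add: pser_mult_LE fun_eq_iff sum_distrib_left mult.left_commute)

lemma zero_LE: "(\<lambda>_. 0) \<in> LE \<nu>"
  by (simp add: LE_def)

lemma pser_mult_mono_left:
  "pser_mult (\<lambda>\<mu>. if \<mu> = \<alpha> then a else 0) h \<nu> =
     (if (\<forall>i. \<alpha> i \<le> \<nu> i) then a * h (\<lambda>i. \<nu> i - \<alpha> i) else (0::'a::field))"
proof -
  have "pser_mult (\<lambda>\<mu>. if \<mu> = \<alpha> then a else 0) h \<nu> =
       (\<Sum>\<mu>\<in>LE \<nu>. if \<mu> = \<alpha> then a * h (\<lambda>i. \<nu> i - \<mu> i) else 0)"
    unfolding pser_mult_LE by (intro sum.cong) auto
  also have "\<dots> = (if (\<forall>i. \<alpha> i \<le> \<nu> i) then a * h (\<lambda>i. \<nu> i - \<alpha> i) else 0)"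
    by (subst sum.delta[OF finite_LE]) (simp add: LE_def)
  finally show ?thesis .
qed

lemma pser_mult_one_left:
  "pser_mult (\<lambda>\<mu>. if \<mu> = (\<lambda>_. 0) then 1 else 0) h = (h :: ('n::finite, 'a::field) pser)"
  by (rule ext) (simp add: pser_mult_mono_left)

lemma pser_mult_one_right:
  "pser_mult h (\<lambda>\<mu>. if \<mu> = (\<lambda>_. 0) then 1 else 0) = (h :: ('n::finite, 'a::field) pser)"
  by (subst pser_mult_comm) (rule pser_mult_one_left)

lemma pser_mult_zero_right:
  "pser_mult h (\<lambda>_. 0) = (\<lambda>_. 0 :: 'a::field)"
  by (simp add: pser_mult_def fun_eq_iff)

lemma pser_mult_zero_left:
  "pser_mult (\<lambda>_. 0) h = (\<lambda>_. 0 :: 'a::field)"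
  by (simp add: pser_mult_def fun_eq_iff)


typedef ('n, 'a) mps = "UNIV :: (('n \<Rightarrow> nat) \<Rightarrow> 'a) set" by simp

lemma Rep_Abs_mps [simp]: "Rep_mps (Abs_mps f) = f"
  by (simp add: Abs_mps_inverse)

definition pone :: "('n, 'a::field) pser" where
  "pone = (\<lambda>\<nu>. if \<nu> = (\<lambda>_. 0) then 1 else 0)"

instantiation mps :: (finite, field) comm_ring_1
begin
definition "0 = Abs_mps (\<lambda>_. 0)"
definition "1 = Abs_mps pone"
definition "x + y = Abs_mps (\<lambda>\<nu>. Rep_mps x \<nu> + Rep_mps y \<nu>)"
definition "x - y = Abs_mps (\<lambda>\<nu>. Rep_mps x \<nu> - Rep_mps y \<nu>)"
definition "- x = Abs_mps (\<lambda>\<nu>. - Rep_mps x \<nu>)"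
definition "x * y = Abs_mps (pser_mult (Rep_mps x) (Rep_mps y))"
instance
proof
  fix a b c :: "('a, 'b) mps"
  show "a * b * c = a * (b * c)" by (simp add: times_mps_def pser_mult_assoc)
  show "a * b = b * a" by (simp add: times_mps_def pser_mult_comm)
  show "1 * a = a" by (simp add: times_mps_def one_mps_def pone_def pser_mult_one_left Rep_mps_inverse)
  show "(a + b) * c = a * c + b * c"
    by (simp add: times_mps_def plus_mps_def pser_mult_add_left)
  show "a + b + c = a + (b + c)" by (simp add: plus_mps_def add.assoc)
  show "a + b = b + a" by (simp add: plus_mps_def add.commute)
  show "0 + a = a" by (simp add: plus_mps_def zero_mps_def Rep_mps_inverse)
  show "- a + a = 0" by (simp add: plus_mps_def zero_mps_def uminus_mps_def)
  show "a - b = a + - b" by (simp add: plus_mps_def minus_mps_def uminus_mps_def)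
  show "(0::('a, 'b) mps) \<noteq> 1"
  proof
    assume "(0::('a, 'b) mps) = 1"
    then have "Rep_mps (0::('a, 'b) mps) (\<lambda>_. 0) = Rep_mps (1::('a, 'b) mps) (\<lambda>_. 0)" by simp
    then show False by (simp add: zero_mps_def one_mps_def pone_def)
  qed
qed
end

lemma Rep_mps_plus: "Rep_mps (x + y) = (\<lambda>\<nu>. Rep_mps x \<nu> + Rep_mps y \<nu>)"
  by (simp add: plus_mps_def)

lemma Rep_mps_times: "Rep_mps (x * y) = pser_mult (Rep_mps x) (Rep_mps y)"
  by (simp add: times_mps_def)

lemma Rep_mps_one: "Rep_mps 1 = pone"
  by (simp add: one_mps_def)

lemma Rep_mps_zero: "Rep_mps 0 = (\<lambda>_. 0)"
  by (simp add: zero_mps_def)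

lemma Rep_mps_sum: "Rep_mps (sum f A) = (\<lambda>\<nu>. \<Sum>i\<in>A. Rep_mps (f i) \<nu>)"
  by (induction A rule: infinite_finite_induct) (auto simp: Rep_mps_plus Rep_mps_zero)

lemma Rep_mps_of_nat:
  "Rep_mps (of_nat n :: ('n::finite, 'a::field) mps) = (\<lambda>\<nu>. if \<nu> = (\<lambda>_. 0) then of_nat n else 0)"
  by (induction n) (auto simp: Rep_mps_plus Rep_mps_zero Rep_mps_one pone_def)

lemma CHAR_mps: "CHAR(('n::finite, 'a::field) mps) = CHAR('a)"
proof (rule CHAR_eqI)
  show "of_nat CHAR('a) = (0 :: ('n, 'a) mps)"
    by (rule Rep_mps_inject[THEN iffD1]) (simp add: Rep_mps_of_nat Rep_mps_zero fun_eq_iff)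
  fix x assume "of_nat x = (0 :: ('n, 'a) mps)"
  then have "Rep_mps (of_nat x :: ('n, 'a) mps) (\<lambda>_. 0) = Rep_mps (0 :: ('n, 'a) mps) (\<lambda>_. 0)" by simp
  then have "of_nat x = (0::'a)" by (simp add: Rep_mps_of_nat Rep_mps_zero)
  then show "CHAR('a) dvd x" by (simp add: of_nat_eq_0_iff_char_dvd)
qed

fun ppow :: "('n::finite, 'a::field) pser \<Rightarrow> nat \<Rightarrow> ('n, 'a) pser" where
  "ppow g 0 = pone"
| "ppow g (Suc k) = pser_mult g (ppow g k)"

lemma ppow_Rep: "ppow g k = Rep_mps (Abs_mps g ^ k)"
  by (induction k) (simp_all add: Rep_mps_one Rep_mps_times)

definition mon :: "('n \<Rightarrow> nat) \<Rightarrow> 'a::zero \<Rightarrow> ('n \<Rightarrow> nat) \<Rightarrow> 'a" where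
  "mon \<alpha> a = (\<lambda>\<mu>. if \<mu> = \<alpha> then a else 0)"

lemma mon_mult:
  fixes \<alpha> \<beta> :: "'n::finite \<Rightarrow> nat"
  shows "pser_mult (mon \<alpha> a) (mon \<beta> b) = mon (\<lambda>i. \<alpha> i + \<beta> i) (a * b :: 'a::field)"
proof
  fix \<nu> :: "'n \<Rightarrow> nat"
  show "pser_mult (mon \<alpha> a) (mon \<beta> b) \<nu> = mon (\<lambda>i. \<alpha> i + \<beta> i) (a * b) \<nu>"
    unfolding mon_def pser_mult_mono_left
    by (auto simp: fun_eq_iff) (metis add_diff_inverse_nat not_le le_add1)+
qed

lemma mon_pow:
  fixes \<alpha> :: "'n::finite \<Rightarrow> nat" and a :: "'a::field"
  shows "(Abs_mps (mon \<alpha> a) :: ('n, 'a) mps) ^ k = Abs_mps (mon (\<lambda>i. k * \<alpha> i) (a ^ k))"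
proof (induction k)
  case 0
  show ?case by (simp add: one_mps_def mon_def pone_def)
next
  case (Suc k)
  show ?case
    by (simp add: Suc times_mps_def mon_mult algebra_simps)
qed

lemma ppow_frob:
  fixes g :: "('n::finite, 'a::field) pser"
  assumes ch: "CHAR('a) > 0" and pdef: "p = CHAR('a)"
  shows "ppow g p \<nu> = (if \<forall>i. p dvd \<nu> i then g (\<lambda>i. \<nu> i div p) ^ p else 0)"
proof -
  have pr: "prime CHAR(('n, 'a) mps)" unfolding CHAR_mps using prime_CHAR_semidom[OF ch] .
  have pp: "p > 0" using ch pdef by simp
  define T where "T = (\<lambda>\<mu>. if \<mu> \<in> LE \<nu> then g \<mu> else 0)"
  define H where "H = (\<lambda>\<mu>. g \<mu> - T \<mu>)"
  have G: "(Abs_mps g :: ('n, 'a) mps) = Abs_mps T + Abs_mps H"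
    by (rule Rep_mps_inject[THEN iffD1]) (simp add: Rep_mps_plus H_def)
  have pm: "p = CHAR(('n, 'a) mps)" using pdef CHAR_mps[where 'n='n and 'a='a] by simp
  have "Abs_mps g ^ p = (Abs_mps T :: ('n, 'a) mps) ^ p + Abs_mps H ^ p"
    unfolding G by (rule freshmans_dream[OF pr pm])
  then have eq: "ppow g p \<nu> = Rep_mps ((Abs_mps T :: ('n, 'a) mps) ^ p) \<nu> + Rep_mps ((Abs_mps H :: ('n, 'a) mps) ^ p) \<nu>"
    unfolding ppow_Rep by (simp add: Rep_mps_plus)
  have H0: "Rep_mps ((Abs_mps H :: ('n, 'a) mps) ^ p) \<nu> = 0"
  proof -
    obtain q where q: "p = Suc q" using pp by (cases p) auto
    have "Rep_mps ((Abs_mps H :: ('n, 'a) mps) ^ p) \<nu> = pser_mult H (Rep_mps ((Abs_mps H :: ('n, 'a) mps) ^ q)) \<nu>"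
      unfolding q by (simp add: Rep_mps_times)
    also have "\<dots> = 0" unfolding pser_mult_LE
      by (rule sum.neutral) (simp add: H_def T_def)
    finally show ?thesis .
  qed
  have Tsum: "(Abs_mps T :: ('n, 'a) mps) = (\<Sum>\<mu>\<in>LE \<nu>. Abs_mps (mon \<mu> (g \<mu>)))"
  proof (rule Rep_mps_inject[THEN iffD1], rule ext)
    fix \<kappa>
    have "(\<Sum>\<mu>\<in>LE \<nu>. mon \<mu> (g \<mu>) \<kappa>) = (\<Sum>\<mu>\<in>LE \<nu>. if \<kappa> = \<mu> then g \<mu> else 0)"
      by (rule sum.cong) (auto simp: mon_def)
    also have "\<dots> = T \<kappa>" by (simp add: sum.delta'[OF finite_LE] T_def)
    finally show "Rep_mps (Abs_mps T :: ('n, 'a) mps) \<kappa> = Rep_mps (\<Sum>\<mu>\<in>LE \<nu>. Abs_mps (mon \<mu> (g \<mu>)) :: ('n, 'a) mps) \<kappa>"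
      by (simp add: Rep_mps_sum)
  qed
  have "(Abs_mps T :: ('n, 'a) mps) ^ p = (\<Sum>\<mu>\<in>LE \<nu>. Abs_mps (mon \<mu> (g \<mu>)) ^ p)"
    unfolding Tsum by (rule freshmans_dream_sum[OF pr pm])
  also have "\<dots> = (\<Sum>\<mu>\<in>LE \<nu>. Abs_mps (mon (\<lambda>i. p * \<mu> i) (g \<mu> ^ p)))"
    by (simp add: mon_pow)
  finally have T1: "Rep_mps ((Abs_mps T :: ('n, 'a) mps) ^ p) \<nu> =
      (\<Sum>\<mu>\<in>LE \<nu>. if \<nu> = (\<lambda>i. p * \<mu> i) then g \<mu> ^ p else 0)"
    by (simp add: Rep_mps_sum mon_def)
  show ?thesis
  proof (cases "\<forall>i. p dvd \<nu> i")
    case True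
    define \<mu>0 where "\<mu>0 = (\<lambda>i. \<nu> i div p)"
    have iff: "\<nu> = (\<lambda>i. p * \<mu> i) \<longleftrightarrow> \<mu>0 = \<mu>" for \<mu>
    proof
      assume "\<nu> = (\<lambda>i. p * \<mu> i)" then show "\<mu>0 = \<mu>" unfolding \<mu>0_def using pp by auto
    next
      assume "\<mu>0 = \<mu>" then show "\<nu> = (\<lambda>i. p * \<mu> i)" unfolding \<mu>0_def using True
        by (auto simp: fun_eq_iff) (metis dvd_mult_div_cancel)
    qed
    have inLE: "\<mu>0 \<in> LE \<nu>" unfolding \<mu>0_def LE_def by simp
    have "(\<Sum>\<mu>\<in>LE \<nu>. if \<nu> = (\<lambda>i. p * \<mu> i) then g \<mu> ^ p else 0) =
          (\<Sum>\<mu>\<in>LE \<nu>. if \<mu>0 = \<mu> then g \<mu> ^ p else 0)"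
      by (rule sum.cong) (simp_all add: iff)
    also have "\<dots> = g \<mu>0 ^ p" using inLE by (simp add: sum.delta'[OF finite_LE])
    finally show ?thesis using eq H0 T1 True by (simp add: \<mu>0_def)
  next
    case False
    have "(\<Sum>\<mu>\<in>LE \<nu>. if \<nu> = (\<lambda>i. p * \<mu> i) then g \<mu> ^ p else 0) = 0"
      by (rule sum.neutral) (use False in auto)
    then have "ppow g p \<nu> = 0" using eq H0 T1 by simp
    then show ?thesis using False by (simp only: if_False)
  qed
qed




definition wt :: "('n::finite \<Rightarrow> real) \<Rightarrow> ('n \<Rightarrow> nat) \<Rightarrow> real" where
  "wt r \<nu> = (\<Prod>i\<in>UNIV. r i ^ \<nu> i)"

lemma wt_pos: "\<forall>i. r i > 0 \<Longrightarrow> wt r \<nu> > 0"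
  unfolding wt_def by (intro prod_pos) auto

lemma wt_add: "wt r (\<lambda>i. \<alpha> i + \<beta> i) = wt r \<alpha> * wt r \<beta>"
  unfolding wt_def by (simp add: power_add prod.distrib)

lemma carrier_tate: "carrier (tate_ring v r) = {f. ((\<lambda>\<nu>. v (f \<nu>) * wt r \<nu>) \<longlongrightarrow> 0) cofinite}"
  by (simp add: tate_ring_def wt_def)

lemma tendsto_cofinite_iff:
  assumes "\<And>x. X x \<ge> (0::real)"
  shows "(X \<longlongrightarrow> 0) cofinite \<longleftrightarrow> (\<forall>e>0. finite {x. e \<le> X x})"
proof -
  have "(X \<longlongrightarrow> 0) cofinite \<longleftrightarrow> (\<forall>e>0. eventually (\<lambda>x. dist (X x) 0 < e) cofinite)"
    by (rule tendsto_iff)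
  also have "\<dots> \<longleftrightarrow> (\<forall>e>0. finite {x. e \<le> X x})"
    using assms by (simp add: eventually_cofinite not_less)
  finally show ?thesis .
qed

definition tcar :: "('a::field \<Rightarrow> real) \<Rightarrow> ('n::finite \<Rightarrow> real) \<Rightarrow> ('n, 'a) pser set" where
  "tcar v r = {f. \<forall>e>0. finite {\<nu>. e \<le> v (f \<nu>) * wt r \<nu>}}"

lemma carrier_tcar:
  assumes nav: "nonarch_abs v" and rpos: "\<forall>i. r i > 0"
  shows "carrier (tate_ring v r) = tcar v r"
proof -
  have "((\<lambda>\<nu>. v (f \<nu>) * wt r \<nu>) \<longlongrightarrow> 0) cofinite \<longleftrightarrow> (\<forall>e>0. finite {\<nu>. e \<le> v (f \<nu>) * wt r \<nu>})" for f
    by (rule tendsto_cofinite_iff) (simp add: nav_ge0[OF nav] wt_pos[OF rpos] less_imp_le)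
  then show ?thesis unfolding carrier_tate tcar_def by blast
qed

lemma tcar_finsupp:
  assumes nav: "nonarch_abs v" and fin: "finite {\<nu>. f \<nu> \<noteq> 0}"
  shows "f \<in> tcar v r"
  unfolding tcar_def
proof (intro CollectI allI impI)
  fix e :: real assume e: "e > 0"
  have "{\<nu>. e \<le> v (f \<nu>) * wt r \<nu>} \<subseteq> {\<nu>. f \<nu> \<noteq> 0}"
    using e nav_0[OF nav] by auto
  then show "finite {\<nu>. e \<le> v (f \<nu>) * wt r \<nu>}" using fin by (rule finite_subset)
qed

lemma tcar_add:
  assumes nav: "nonarch_abs v" and f: "f \<in> tcar v r" and g: "g \<in> tcar v r" and rpos: "\<forall>i. r i > 0"
  shows "(\<lambda>\<nu>. f \<nu> + g \<nu>) \<in> tcar v r"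
  unfolding tcar_def
proof (intro CollectI allI impI)
  fix e :: real assume e: "e > 0"
  have "{\<nu>. e \<le> v (f \<nu> + g \<nu>) * wt r \<nu>} \<subseteq> {\<nu>. e \<le> v (f \<nu>) * wt r \<nu>} \<union> {\<nu>. e \<le> v (g \<nu>) * wt r \<nu>}"
  proof
    fix \<nu> assume "\<nu> \<in> {\<nu>. e \<le> v (f \<nu> + g \<nu>) * wt r \<nu>}"
    then have a: "e \<le> v (f \<nu> + g \<nu>) * wt r \<nu>" by simp
    have w: "wt r \<nu> > 0" by (rule wt_pos[OF rpos])
    have "v (f \<nu> + g \<nu>) * wt r \<nu> \<le> max (v (f \<nu>)) (v (g \<nu>)) * wt r \<nu>"
      using nav_max[OF nav] w by (simp add: mult_right_mono)
    then show "\<nu> \<in> {\<nu>. e \<le> v (f \<nu>) * wt r \<nu>} \<union> {\<nu>. e \<le> v (g \<nu>) * wt r \<nu>}"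
      using a by (auto simp: max_def split: if_splits)
  qed
  moreover have "finite ({\<nu>. e \<le> v (f \<nu>) * wt r \<nu>} \<union> {\<nu>. e \<le> v (g \<nu>) * wt r \<nu>})"
    using f g e unfolding tcar_def by auto
  ultimately show "finite {\<nu>. e \<le> v (f \<nu> + g \<nu>) * wt r \<nu>}" by (rule finite_subset)
qed

lemma tcar_uminus:
  assumes nav: "nonarch_abs v" and f: "f \<in> tcar v r"
  shows "(\<lambda>\<nu>. - f \<nu>) \<in> tcar v r"
  using f unfolding tcar_def by (simp add: nav_minus[OF nav])

lemma nav_of_nat: assumes nav: "nonarch_abs v" shows "v (of_nat k :: 'a::field) \<le> 1"
proof (induction k)
  case 0 then show ?case using nav_0[OF nav] by simp
next
  case (Suc k)
  have "v (1 + of_nat k :: 'a) \<le> max (v 1) (v (of_nat k))" by (rule nav_max[OF nav])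
  then show ?case using Suc nav_1[OF nav] by (simp add: max_def split: if_splits)
qed

lemma tcar_scal:
  assumes nav: "nonarch_abs v" and f: "f \<in> tcar v r" and rpos: "\<forall>i. r i > 0"
  shows "(\<lambda>\<nu>. c * f \<nu>) \<in> tcar v r"
proof (cases "c = 0")
  case True then show ?thesis using tcar_finsupp[OF nav, of "\<lambda>_. 0" r] by simp
next
  case False
  then have vc: "v c > 0" using nav_ge0[OF nav, of c] nav_eq0[OF nav, of c] by simp
  show ?thesis
    unfolding tcar_def
  proof (intro CollectI allI impI)
    fix e :: real assume e: "e > 0"
    have "{\<nu>. e \<le> v (c * f \<nu>) * wt r \<nu>} \<subseteq> {\<nu>. e / v c \<le> v (f \<nu>) * wt r \<nu>}"
      using vc by (auto simp: nav_mult[OF nav] pos_divide_le_eq ac_simps)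
    moreover have "finite {\<nu>. e / v c \<le> v (f \<nu>) * wt r \<nu>}"
      using f e vc unfolding tcar_def by auto
    ultimately show "finite {\<nu>. e \<le> v (c * f \<nu>) * wt r \<nu>}" by (rule finite_subset)
  qed
qed

lemma tcar_bounded:
  assumes nav: "nonarch_abs v" and f: "f \<in> tcar v r"
  shows "\<exists>M>0. \<forall>\<nu>. v (f \<nu>) * wt r \<nu> \<le> M"
proof -
  define S where "S = {\<nu>. 1 \<le> v (f \<nu>) * wt r \<nu>}"
  have fin: "finite S" using f unfolding tcar_def S_def by auto
  define M where "M = max 1 (Max ((\<lambda>\<nu>. v (f \<nu>) * wt r \<nu>) ` S))"
  show ?thesis
  proof (intro exI[of _ M] conjI allI)
    show "M > 0" unfolding M_def by (simp add: less_max_iff_disj)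
    fix \<nu>
    show "v (f \<nu>) * wt r \<nu> \<le> M"
    proof (cases "\<nu> \<in> S")
      case True
      then have "v (f \<nu>) * wt r \<nu> \<le> Max ((\<lambda>\<nu>. v (f \<nu>) * wt r \<nu>) ` S)"
        using fin by (intro Max_ge) auto
      then show ?thesis unfolding M_def by simp
    next
      case False then show ?thesis unfolding M_def S_def by simp
    qed
  qed
qed

lemma tcar_mult:
  assumes nav: "nonarch_abs v" and f: "f \<in> tcar v r" and g: "g \<in> tcar v r" and rpos: "\<forall>i. r i > 0"
  shows "pser_mult f g \<in> tcar v r"
  unfolding tcar_def
proof (intro CollectI allI impI)
  fix e :: real assume e: "e > 0"
  obtain Mf where Mf: "Mf > 0" "\<And>\<nu>. v (f \<nu>) * wt r \<nu> \<le> Mf" using tcar_bounded[OF nav f] by blast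
  obtain Mg where Mg: "Mg > 0" "\<And>\<nu>. v (g \<nu>) * wt r \<nu> \<le> Mg" using tcar_bounded[OF nav g] by blast
  define F1 where "F1 = {\<mu>. e / Mg \<le> v (f \<mu>) * wt r \<mu>}"
  define G1 where "G1 = {\<mu>. e / Mf \<le> v (g \<mu>) * wt r \<mu>}"
  have fin: "finite (F1 \<times> G1)"
    using f g e Mf(1) Mg(1) unfolding tcar_def F1_def G1_def by auto
  have sub: "{\<nu>. e \<le> v (pser_mult f g \<nu>) * wt r \<nu>} \<subseteq> (\<lambda>(a, b). \<lambda>i. a i + b i) ` (F1 \<times> G1)"
  proof
    fix \<nu> assume "\<nu> \<in> {\<nu>. e \<le> v (pser_mult f g \<nu>) * wt r \<nu>}"
    then have big: "e \<le> v (pser_mult f g \<nu>) * wt r \<nu>" by simp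
    have w: "wt r \<nu> > 0" by (rule wt_pos[OF rpos])
    show "\<nu> \<in> (\<lambda>(a, b). \<lambda>i. a i + b i) ` (F1 \<times> G1)"
    proof (rule ccontr)
      assume nin: "\<nu> \<notin> (\<lambda>(a, b). \<lambda>i. a i + b i) ` (F1 \<times> G1)"
      have "v (f \<mu> * g (\<lambda>i. \<nu> i - \<mu> i)) < e / wt r \<nu>" if mu: "\<mu> \<in> LE \<nu>" for \<mu>
      proof -
        define \<beta> where "\<beta> = (\<lambda>i. \<nu> i - \<mu> i)"
        have nu: "\<nu> = (\<lambda>i. \<mu> i + \<beta> i)" using mu unfolding \<beta>_def LE_def by (auto simp: fun_eq_iff)
        have wsplit: "wt r \<nu> = wt r \<mu> * wt r \<beta>" using nu wt_add by metis
        have X0: "v (f \<mu>) * wt r \<mu> \<ge> 0" using nav_ge0[OF nav] wt_pos[OF rpos] by (simp add: less_imp_le)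
        have Y0: "v (g \<beta>) * wt r \<beta> \<ge> 0" using nav_ge0[OF nav] wt_pos[OF rpos] by (simp add: less_imp_le)
        have prod: "v (f \<mu> * g \<beta>) * wt r \<nu> = (v (f \<mu>) * wt r \<mu>) * (v (g \<beta>) * wt r \<beta>)"
          using wsplit by (simp add: nav_mult[OF nav] algebra_simps)
        have "(v (f \<mu>) * wt r \<mu>) * (v (g \<beta>) * wt r \<beta>) < e"
        proof (cases "\<mu> \<in> F1")
          case False
          then have "v (f \<mu>) * wt r \<mu> < e / Mg" unfolding F1_def by simp
          then have "(v (f \<mu>) * wt r \<mu>) * Mg < e" using Mg(1) by (simp add: pos_less_divide_eq)
          moreover have "(v (f \<mu>) * wt r \<mu>) * (v (g \<beta>) * wt r \<beta>) \<le> (v (f \<mu>) * wt r \<mu>) * Mg"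
            by (rule mult_left_mono[OF Mg(2) X0])
          ultimately show ?thesis by linarith
        next
          case True
          then have "\<beta> \<notin> G1" using nin nu by auto
          then have "v (g \<beta>) * wt r \<beta> < e / Mf" unfolding G1_def by simp
          then have "(v (g \<beta>) * wt r \<beta>) * Mf < e" using Mf(1) by (simp add: pos_less_divide_eq)
          moreover have "(v (g \<beta>) * wt r \<beta>) * (v (f \<mu>) * wt r \<mu>) \<le> (v (g \<beta>) * wt r \<beta>) * Mf"
            by (rule mult_left_mono[OF Mf(2) Y0])
          ultimately show ?thesis by (simp add: mult.commute)
        qed
        then have "v (f \<mu> * g \<beta>) * wt r \<nu> < e" using prod by simp
        then show ?thesis using w unfolding \<beta>_def by (simp add: pos_less_divide_eq)
      qed
      then have "v (pser_mult f g \<nu>) < e / wt r \<nu>"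
        unfolding pser_mult_LE using e w by (intro nav_sum_less[OF nav]) auto
      then have "v (pser_mult f g \<nu>) * wt r \<nu> < e" using w by (simp add: pos_less_divide_eq)
      then show False using big by simp
    qed
  qed
  show "finite {\<nu>. e \<le> v (pser_mult f g \<nu>) * wt r \<nu>}"
    by (rule finite_subset[OF sub]) (use fin in simp)
qed




lemma TR_add: "x \<oplus>\<^bsub>tate_ring v r\<^esub> y = (\<lambda>\<nu>. x \<nu> + y \<nu>)"
  by (simp add: tate_ring_def)
lemma TR_mult: "x \<otimes>\<^bsub>tate_ring v r\<^esub> y = pser_mult x y"
  by (simp add: tate_ring_def)
lemma TR_one: "\<one>\<^bsub>tate_ring v r\<^esub> = pone"
  by (simp add: tate_ring_def pone_def)
lemma TR_zero: "\<zero>\<^bsub>tate_ring v r\<^esub> = (\<lambda>_. 0)"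
  by (simp add: tate_ring_def)

context
  fixes v :: "'a::field \<Rightarrow> real" and r :: "'n::finite \<Rightarrow> real"
  assumes nav: "nonarch_abs v" and rpos: "\<forall>i. r i > 0"
begin

lemma car: "carrier (tate_ring v r) = tcar v r"
  by (rule carrier_tcar[OF nav rpos])

lemma car_add [simp]: "x \<in> tcar v r \<Longrightarrow> y \<in> tcar v r \<Longrightarrow> (\<lambda>\<nu>. x \<nu> + y \<nu>) \<in> tcar v r"
  by (rule tcar_add[OF nav _ _ rpos])
lemma car_uminus [simp]: "x \<in> tcar v r \<Longrightarrow> (\<lambda>\<nu>. - x \<nu>) \<in> tcar v r"
  by (rule tcar_uminus[OF nav])
lemma car_diff [simp]: "x \<in> tcar v r \<Longrightarrow> y \<in> tcar v r \<Longrightarrow> (\<lambda>\<nu>. x \<nu> - y \<nu>) \<in> tcar v r"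
  using car_add[of x "\<lambda>\<nu>. - y \<nu>"] by simp
lemma car_mult [simp]: "x \<in> tcar v r \<Longrightarrow> y \<in> tcar v r \<Longrightarrow> pser_mult x y \<in> tcar v r"
  by (rule tcar_mult[OF nav _ _ rpos])
lemma car_scal [simp]: "x \<in> tcar v r \<Longrightarrow> (\<lambda>\<nu>. c * x \<nu>) \<in> tcar v r"
  by (rule tcar_scal[OF nav _ rpos])
lemma car_zero [simp]: "(\<lambda>_. 0) \<in> tcar v r"
  by (rule tcar_finsupp[OF nav]) simp
lemma car_pone [simp]: "pone \<in> tcar v r"
proof (rule tcar_finsupp[OF nav])
  have "{\<nu>. pone \<nu> \<noteq> (0::'a)} \<subseteq> {(\<lambda>_. 0)}" by (auto simp: pone_def)
  then show "finite {\<nu>. pone \<nu> \<noteq> (0::'a)}" by (rule finite_subset) simp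
qed
lemma car_ppow [simp]: "g \<in> tcar v r \<Longrightarrow> ppow g k \<in> tcar v r"
  by (induction k) simp_all

lemma TR_ainv: assumes "x \<in> tcar v r" shows "\<ominus>\<^bsub>tate_ring v r\<^esub> x = (\<lambda>\<nu>. - x \<nu>)"
  unfolding a_inv_def m_inv_def
proof (rule the_equality)
  show "(\<lambda>\<nu>. - x \<nu>) \<in> carrier (add_monoid (tate_ring v r)) \<and>
    x \<otimes>\<^bsub>add_monoid (tate_ring v r)\<^esub> (\<lambda>\<nu>. - x \<nu>) = \<one>\<^bsub>add_monoid (tate_ring v r)\<^esub> \<and>
    (\<lambda>\<nu>. - x \<nu>) \<otimes>\<^bsub>add_monoid (tate_ring v r)\<^esub> x = \<one>\<^bsub>add_monoid (tate_ring v r)\<^esub>"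
    using assms car by (simp add: tate_ring_def)
  fix y assume "y \<in> carrier (add_monoid (tate_ring v r)) \<and>
    x \<otimes>\<^bsub>add_monoid (tate_ring v r)\<^esub> y = \<one>\<^bsub>add_monoid (tate_ring v r)\<^esub> \<and>
    y \<otimes>\<^bsub>add_monoid (tate_ring v r)\<^esub> x = \<one>\<^bsub>add_monoid (tate_ring v r)\<^esub>"
  then have "(\<lambda>\<nu>. x \<nu> + y \<nu>) = (\<lambda>_. 0)" by (simp add: tate_ring_def)
  then show "y = (\<lambda>\<nu>. - x \<nu>)" by (simp add: fun_eq_iff add_eq_0_iff)
qed

lemma TR_aminus [simp]: "x \<in> tcar v r \<Longrightarrow> y \<in> tcar v r \<Longrightarrow> x \<ominus>\<^bsub>tate_ring v r\<^esub> y = (\<lambda>\<nu>. x \<nu> - y \<nu>)"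
  unfolding a_minus_def by (simp add: TR_ainv TR_add)

lemma fdelta_eq: "fdelta (tate_ring v r) x = (\<lambda>y. if y = x then pone else (\<lambda>_. 0))"
  unfolding fdelta_def TR_one[of v r] TR_zero[of v r] by (rule refl)

lemma fdelta_car [simp]: "fdelta (tate_ring v r) x y \<in> tcar v r"
  by (simp add: fdelta_eq)

lemma rel_car:
  assumes "u \<in> kahler_rel (tate_ring v r) S"
  shows "u y \<in> tcar v r"
  using assms
proof (induction rule: kahler_rel.induct)
  case zero then show ?case by (simp add: TR_zero)
next
  case (add_rel x y') then show ?case by (simp add: fsub_def fadd_def TR_add)
next
  case (mult_rel x y') then show ?case
    by (simp add: fsub_def fadd_def fsmult_def TR_add TR_mult car)
next
  case (base_rel s) then show ?case by simp
next
  case (sum u w) then show ?case by (simp add: fadd_def TR_add)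
next
  case (smult a u) then show ?case by (simp add: fsmult_def TR_mult car)
qed

lemma rel_from_diff:
  assumes d: "fsub (tate_ring v r) u w \<in> kahler_rel (tate_ring v r) S"
    and w: "w \<in> kahler_rel (tate_ring v r) S"
    and uc: "\<And>y. u y \<in> tcar v r"
  shows "u \<in> kahler_rel (tate_ring v r) S"
proof -
  have "fadd (tate_ring v r) (fsub (tate_ring v r) u w) w \<in> kahler_rel (tate_ring v r) S"
    using d w by (rule kahler_rel.sum)
  moreover have "fadd (tate_ring v r) (fsub (tate_ring v r) u w) w = u"
    using uc rel_car[OF w] by (simp add: fadd_def fsub_def TR_add fun_eq_iff)
  ultimately show ?thesis by simp
qed

lemma d_add:
  assumes x: "x \<in> tcar v r" and y: "y \<in> tcar v r"
    and dx: "fdelta (tate_ring v r) x \<in> kahler_rel (tate_ring v r) S"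
    and dy: "fdelta (tate_ring v r) y \<in> kahler_rel (tate_ring v r) S"
  shows "fdelta (tate_ring v r) (\<lambda>\<nu>. x \<nu> + y \<nu>) \<in> kahler_rel (tate_ring v r) S"
proof -
  have "fsub (tate_ring v r) (fdelta (tate_ring v r) (x \<oplus>\<^bsub>tate_ring v r\<^esub> y))
      (fadd (tate_ring v r) (fdelta (tate_ring v r) x) (fdelta (tate_ring v r) y)) \<in> kahler_rel (tate_ring v r) S"
    using x y car by (intro kahler_rel.add_rel) auto
  then have "fsub (tate_ring v r) (fdelta (tate_ring v r) (\<lambda>\<nu>. x \<nu> + y \<nu>))
      (fadd (tate_ring v r) (fdelta (tate_ring v r) x) (fdelta (tate_ring v r) y)) \<in> kahler_rel (tate_ring v r) S"
    by (simp add: TR_add)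
  moreover have "fadd (tate_ring v r) (fdelta (tate_ring v r) x) (fdelta (tate_ring v r) y) \<in> kahler_rel (tate_ring v r) S"
    using dx dy by (rule kahler_rel.sum)
  ultimately show ?thesis by (rule rel_from_diff) simp
qed


lemma pser_mult_pone [simp]: "pser_mult x pone = (x :: ('n, 'a) pser)"
  unfolding pone_def by (rule pser_mult_one_right)

lemma d_pow:
  assumes g: "g \<in> tcar v r"
  shows "fsub (tate_ring v r) (fdelta (tate_ring v r) (ppow g (Suc k)))
           (\<lambda>y. if y = g then (\<lambda>\<nu>. of_nat (Suc k) * ppow g k \<nu>) else (\<lambda>_. 0))
         \<in> kahler_rel (tate_ring v r) S"
proof (induction k)
  case 0
  have "fsub (tate_ring v r) (fdelta (tate_ring v r) (ppow g (Suc 0)))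
           (\<lambda>y. if y = g then (\<lambda>\<nu>. of_nat (Suc 0) * ppow g 0 \<nu>) else (\<lambda>_. 0)) = (\<lambda>_. \<zero>\<^bsub>tate_ring v r\<^esub>)"
  proof
    fix y
    show "fsub (tate_ring v r) (fdelta (tate_ring v r) (ppow g (Suc 0)))
           (\<lambda>y. if y = g then (\<lambda>\<nu>. of_nat (Suc 0) * ppow g 0 \<nu>) else (\<lambda>_. 0)) y = \<zero>\<^bsub>tate_ring v r\<^esub>"
      using g by (cases "y = g") (simp_all add: fsub_def fdelta_eq TR_zero)
  qed
  then show ?case using kahler_rel.zero by metis
next
  case (Suc k)
  define h where "h = ppow g (Suc k)"
  define h' where "h' = ppow g k"
  have hc: "h \<in> tcar v r" "h' \<in> tcar v r" using g by (simp_all add: h_def h'_def)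
  have hh: "pser_mult g h' = h" by (simp add: h_def h'_def)
  have M: "fsub (tate_ring v r) (fdelta (tate_ring v r) (g \<otimes>\<^bsub>tate_ring v r\<^esub> h))
       (fadd (tate_ring v r) (fsmult (tate_ring v r) g (fdelta (tate_ring v r) h))
          (fsmult (tate_ring v r) h (fdelta (tate_ring v r) g))) \<in> kahler_rel (tate_ring v r) S"
    using g hc car by (intro kahler_rel.mult_rel) auto
  have N: "fsmult (tate_ring v r) g (fsub (tate_ring v r) (fdelta (tate_ring v r) h)
           (\<lambda>y. if y = g then (\<lambda>\<nu>. of_nat (Suc k) * h' \<nu>) else (\<lambda>_. 0))) \<in> kahler_rel (tate_ring v r) S"
    using g car Suc.IH unfolding h_def h'_def by (intro kahler_rel.smult) auto
  have eq: "fadd (tate_ring v r) (fsub (tate_ring v r) (fdelta (tate_ring v r) (g \<otimes>\<^bsub>tate_ring v r\<^esub> h))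
       (fadd (tate_ring v r) (fsmult (tate_ring v r) g (fdelta (tate_ring v r) h))
          (fsmult (tate_ring v r) h (fdelta (tate_ring v r) g))))
     (fsmult (tate_ring v r) g (fsub (tate_ring v r) (fdelta (tate_ring v r) h)
           (\<lambda>y. if y = g then (\<lambda>\<nu>. of_nat (Suc k) * h' \<nu>) else (\<lambda>_. 0))))
     = fsub (tate_ring v r) (fdelta (tate_ring v r) (pser_mult g h))
           (\<lambda>y. if y = g then (\<lambda>\<nu>. of_nat (Suc (Suc k)) * h \<nu>) else (\<lambda>_. 0))"
  proof
    fix y
    show "fadd (tate_ring v r) (fsub (tate_ring v r) (fdelta (tate_ring v r) (g \<otimes>\<^bsub>tate_ring v r\<^esub> h))
       (fadd (tate_ring v r) (fsmult (tate_ring v r) g (fdelta (tate_ring v r) h))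
          (fsmult (tate_ring v r) h (fdelta (tate_ring v r) g))))
     (fsmult (tate_ring v r) g (fsub (tate_ring v r) (fdelta (tate_ring v r) h)
           (\<lambda>y. if y = g then (\<lambda>\<nu>. of_nat (Suc k) * h' \<nu>) else (\<lambda>_. 0)))) y
     = fsub (tate_ring v r) (fdelta (tate_ring v r) (pser_mult g h))
           (\<lambda>y. if y = g then (\<lambda>\<nu>. of_nat (Suc (Suc k)) * h \<nu>) else (\<lambda>_. 0)) y"
      using g hc hh
      by (cases "y = g"; cases "y = h"; cases "y = pser_mult g h")
         (simp_all add: fsub_def fadd_def fsmult_def TR_mult TR_add fdelta_eq pser_mult_diff_right
            pser_mult_scal_right pser_mult_zero_right pser_mult_add_right,
          simp_all add: fun_eq_iff algebra_simps)
  qed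
  have "fadd (tate_ring v r) (fsub (tate_ring v r) (fdelta (tate_ring v r) (g \<otimes>\<^bsub>tate_ring v r\<^esub> h))
       (fadd (tate_ring v r) (fsmult (tate_ring v r) g (fdelta (tate_ring v r) h))
          (fsmult (tate_ring v r) h (fdelta (tate_ring v r) g))))
     (fsmult (tate_ring v r) g (fsub (tate_ring v r) (fdelta (tate_ring v r) h)
           (\<lambda>y. if y = g then (\<lambda>\<nu>. of_nat (Suc k) * h' \<nu>) else (\<lambda>_. 0)))) \<in> kahler_rel (tate_ring v r) S"
    using M N by (rule kahler_rel.sum)
  then have fin: "fsub (tate_ring v r) (fdelta (tate_ring v r) (pser_mult g h))
           (\<lambda>y. if y = g then (\<lambda>\<nu>. of_nat (Suc (Suc k)) * h \<nu>) else (\<lambda>_. 0)) \<in> kahler_rel (tate_ring v r) S"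
    unfolding eq .
  show ?case using fin[unfolded h_def] by (simp only: ppow.simps)
qed

lemma d_frob:
  assumes g: "g \<in> tcar v r" and ch: "CHAR('a) > 0"
  shows "fdelta (tate_ring v r) (ppow g CHAR('a)) \<in> kahler_rel (tate_ring v r) S"
proof -
  obtain k where k: "CHAR('a) = Suc k" using ch by (cases "CHAR('a)") auto
  have "fsub (tate_ring v r) (fdelta (tate_ring v r) (ppow g (Suc k)))
           (\<lambda>y. if y = g then (\<lambda>\<nu>. of_nat (Suc k) * ppow g k \<nu>) else (\<lambda>_. 0))
         \<in> kahler_rel (tate_ring v r) S" by (rule d_pow[OF g])
  moreover have "of_nat (Suc k) = (0::'a)" using k[symmetric] by simp
  moreover have "fsub (tate_ring v r) (fdelta (tate_ring v r) (ppow g (Suc k))) (\<lambda>y. (\<lambda>_. 0)) =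
      fdelta (tate_ring v r) (ppow g (Suc k))"
    by (simp add: fsub_def fun_eq_iff)
  ultimately show ?thesis using k by (simp add: if_distrib cong: if_cong)
qed

lemma d_smul_frob:
  assumes s: "s \<in> tcar v r" "s \<in> S" and G: "G \<in> tcar v r"
    and dG: "fdelta (tate_ring v r) G \<in> kahler_rel (tate_ring v r) S"
  shows "fdelta (tate_ring v r) (pser_mult s G) \<in> kahler_rel (tate_ring v r) S"
proof -
  have "fsub (tate_ring v r) (fdelta (tate_ring v r) (s \<otimes>\<^bsub>tate_ring v r\<^esub> G))
       (fadd (tate_ring v r) (fsmult (tate_ring v r) s (fdelta (tate_ring v r) G))
          (fsmult (tate_ring v r) G (fdelta (tate_ring v r) s))) \<in> kahler_rel (tate_ring v r) S"
    using s G car by (intro kahler_rel.mult_rel) auto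
  moreover have "fadd (tate_ring v r) (fsmult (tate_ring v r) s (fdelta (tate_ring v r) G))
          (fsmult (tate_ring v r) G (fdelta (tate_ring v r) s)) \<in> kahler_rel (tate_ring v r) S"
    using s G car
    by (intro kahler_rel.sum kahler_rel.smult dG kahler_rel.base_rel[OF s(2)]) auto
  ultimately show ?thesis unfolding TR_mult by (rule rel_from_diff) (simp add: fdelta_eq)
qed

lemma d_sum:
  assumes fin: "finite I" and xs: "\<And>i. i \<in> I \<Longrightarrow> x i \<in> tcar v r \<and> fdelta (tate_ring v r) (x i) \<in> kahler_rel (tate_ring v r) S"
    and z: "(\<lambda>_. 0) \<in> S"
  shows "(\<lambda>\<nu>. \<Sum>i\<in>I. x i \<nu>) \<in> tcar v r \<and> fdelta (tate_ring v r) (\<lambda>\<nu>. \<Sum>i\<in>I. x i \<nu>) \<in> kahler_rel (tate_ring v r) S"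
  using fin xs
proof (induction I rule: finite_induct)
  case empty
  then show ?case using kahler_rel.base_rel[OF z] by simp
next
  case (insert i I)
  then have a: "x i \<in> tcar v r" "fdelta (tate_ring v r) (x i) \<in> kahler_rel (tate_ring v r) S"
    and b: "(\<lambda>\<nu>. \<Sum>i\<in>I. x i \<nu>) \<in> tcar v r" "fdelta (tate_ring v r) (\<lambda>\<nu>. \<Sum>i\<in>I. x i \<nu>) \<in> kahler_rel (tate_ring v r) S"
    by auto
  have "(\<lambda>\<nu>. \<Sum>i\<in>insert i I. x i \<nu>) = (\<lambda>\<nu>. x i \<nu> + (\<Sum>i\<in>I. x i \<nu>))"
    using insert.hyps by simp
  then show ?case using d_add[OF a(1) b(1) a(2) b(2)] a(1) b(1) by simp
qed

end




lemma wt_pow: "wt r (\<lambda>i. p * \<mu> i) = wt r \<mu> ^ p"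
  unfolding wt_def prod_power_distrib
  by (rule prod.cong) (simp_all add: power_mult[symmetric] mult.commute)

lemma gg_car:
  assumes nav: "nonarch_abs v" and rpos: "\<forall>i. r i > 0" and pp: "p > 0"
    and f: "f \<in> tcar v r" and Cpos: "C > 0"
    and bnd: "\<And>\<mu>. v (c \<mu>) ^ p \<le> C * v (f (\<lambda>i. p * \<mu> i + j i))"
  shows "c \<in> tcar v (r :: 'n::finite \<Rightarrow> real)"
  unfolding tcar_def
proof (intro CollectI allI impI)
  fix e :: real assume e: "e > 0"
  define N where "N = (\<lambda>\<mu> :: 'n \<Rightarrow> nat. \<lambda>i. p * \<mu> i + j i)"
  have inj: "inj N" unfolding N_def inj_def using pp by (auto simp: fun_eq_iff)
  have wj: "wt r j > 0" by (rule wt_pos[OF rpos])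
  define e' where "e' = e ^ p * wt r j / C"
  have e': "e' > 0" unfolding e'_def using e wj Cpos by simp
  have sub: "{\<mu>. e \<le> v (c \<mu>) * wt r \<mu>} \<subseteq> N -` {\<nu>. e' \<le> v (f \<nu>) * wt r \<nu>}"
  proof
    fix \<mu> assume "\<mu> \<in> {\<mu>. e \<le> v (c \<mu>) * wt r \<mu>}"
    then have a: "e \<le> v (c \<mu>) * wt r \<mu>" by simp
    have wN: "wt r (N \<mu>) = wt r \<mu> ^ p * wt r j"
      unfolding N_def using wt_add[of r "\<lambda>i. p * \<mu> i" j] wt_pow[of r p \<mu>] by simp
    have "e ^ p \<le> (v (c \<mu>) * wt r \<mu>) ^ p" using a e by (simp add: power_mono)
    also have "\<dots> = v (c \<mu>) ^ p * wt r \<mu> ^ p" by (simp add: power_mult_distrib)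
    also have "\<dots> \<le> C * v (f (N \<mu>)) * wt r \<mu> ^ p"
      using bnd[of \<mu>] wt_pos[OF rpos, of \<mu>] unfolding N_def by (simp add: mult_right_mono)
    finally have "e ^ p * wt r j \<le> C * v (f (N \<mu>)) * wt r \<mu> ^ p * wt r j"
      using wj by (simp add: mult_right_mono)
    also have "\<dots> = C * (v (f (N \<mu>)) * wt r (N \<mu>))" unfolding wN by (simp add: ac_simps)
    finally have "e' \<le> v (f (N \<mu>)) * wt r (N \<mu>)"
      unfolding e'_def using Cpos by (simp add: pos_divide_le_eq mult.commute)
    then show "\<mu> \<in> N -` {\<nu>. e' \<le> v (f \<nu>) * wt r \<nu>}" by simp
  qed
  have "finite {\<nu>. e' \<le> v (f \<nu>) * wt r \<nu>}" using f e' unfolding tcar_def by auto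
  then have "finite (N -` {\<nu>. e' \<le> v (f \<nu>) * wt r \<nu>})" using inj by (rule finite_vimageI)
  then show "finite {\<mu>. e \<le> v (c \<mu>) * wt r \<mu>}" using sub by (rule finite_subset[rotated])
qed


lemma decomp_coeff:
  fixes \<nu> j :: "'n \<Rightarrow> nat"
  assumes pp: "p > 0" and j: "\<forall>i. j i < p"
  shows "((\<forall>i. j i \<le> \<nu> i) \<and> (\<forall>i. p dvd (\<nu> i - j i))) \<longleftrightarrow> j = (\<lambda>i. \<nu> i mod p)"
proof
  assume a: "(\<forall>i. j i \<le> \<nu> i) \<and> (\<forall>i. p dvd (\<nu> i - j i))"
  show "j = (\<lambda>i. \<nu> i mod p)"
  proof
    fix i
    obtain k where k: "\<nu> i - j i = p * k" using a by blast
    then have "\<nu> i = p * k + j i" using a by (metis le_add_diff_inverse2)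
    then have "\<nu> i mod p = j i mod p" by simp
    then show "j i = \<nu> i mod p" using j by simp
  qed
next
  assume "j = (\<lambda>i. \<nu> i mod p)"
  then show "(\<forall>i. j i \<le> \<nu> i) \<and> (\<forall>i. p dvd (\<nu> i - j i))"
    by (simp add: minus_mod_eq_mult_div)
qed

theorem lemma2p15:
  fixes v :: "'a::field \<Rightarrow> real" and r :: "'n::finite \<Rightarrow> real"
  assumes "nonarch_abs v"
    and "abs_complete v"
    and "CHAR('a) > 0"
    and "\<forall>i. r i > 0"
    and "finite_p_degree TYPE('a) CHAR('a)"
  shows "kahler_zero (tate_ring v r) (poly_set :: ('n, 'a) pser set)"
proof -
  note nav = assms(1) and cpl = assms(2) and ch = assms(3) and rpos = assms(4)
  define p where "p = CHAR('a)"
  have pp: "p > 0" using ch p_def by simp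
  obtain B :: "'a set" where B: "finite B" "\<forall>x::'a. \<exists>c. x = (\<Sum>b\<in>B. (c b) ^ p * b)"
    using assms(5) unfolding finite_p_degree_def p_def by blast
  obtain C where C: "C > 0" "\<forall>a\<in>pspan p B. \<exists>c. a = (\<Sum>b\<in>B. c b ^ p * b) \<and> (\<forall>b\<in>B. v (c b) ^ p \<le> C * v a)"
    using rep_bound[OF nav cpl ch p_def B(1)] by blast
  have "\<forall>a. \<exists>c. a = (\<Sum>b\<in>B. c b ^ p * b) \<and> (\<forall>b\<in>B. v (c b) ^ p \<le> C * v a)"
    using C(2) B(2) unfolding pspan_def by blast
  then obtain rep where rep: "\<And>a. a = (\<Sum>b\<in>B. rep a b ^ p * b)"
    "\<And>a b. b \<in> B \<Longrightarrow> v (rep a b) ^ p \<le> C * v a"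
    by metis
  show ?thesis
    unfolding kahler_zero_def
  proof
    fix f assume "f \<in> carrier (tate_ring v r)"
    then have f: "f \<in> tcar v r" using car[OF nav rpos] by simp
    define J where "J = {j :: 'n \<Rightarrow> nat. \<forall>i. j i < p}"
    have finJ: "finite J"
    proof (rule finite_subset[OF _ finite_LE[of "\<lambda>_. p"]])
      show "J \<subseteq> LE (\<lambda>_. p)" unfolding J_def LE_def by (auto simp: less_imp_le)
    qed
    define gg where "gg = (\<lambda>(j, b) (\<mu> :: 'n \<Rightarrow> nat). rep (f (\<lambda>i. p * \<mu> i + j i)) b)"
    define tm where "tm = (\<lambda>(j, b). pser_mult (mon j b) (ppow (gg (j, b)) p))"
    have ggc: "gg (j, b) \<in> tcar v r" if "b \<in> B" for j b
      unfolding gg_def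
      by (rule gg_car[OF nav rpos pp f C(1), where j=j]) (simp add: rep(2)[OF that])
    have monc: "mon j b \<in> tcar v r" "mon j b \<in> poly_set" for j :: "'n \<Rightarrow> nat" and b :: 'a
    proof -
      have "{\<nu>. mon j b \<nu> \<noteq> 0} \<subseteq> {j}" by (auto simp: mon_def)
      then have "finite {\<nu>. mon j b \<nu> \<noteq> 0}" by (rule finite_subset) simp
      then show "mon j b \<in> tcar v r" "mon j b \<in> poly_set"
        using tcar_finsupp[OF nav] by (auto simp: poly_set_def)
    qed
    have tm_ok: "tm x \<in> tcar v r \<and> fdelta (tate_ring v r) (tm x) \<in> kahler_rel (tate_ring v r) poly_set"
      if "x \<in> J \<times> B" for x
    proof -
      obtain j b where x: "x = (j, b)" by (cases x)
      have b: "b \<in> B" using that x by auto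
      have G: "ppow (gg (j, b)) p \<in> tcar v r" using ggc[OF b] car_ppow[OF nav rpos] by blast
      have dG: "fdelta (tate_ring v r) (ppow (gg (j, b)) p) \<in> kahler_rel (tate_ring v r) poly_set"
        unfolding p_def by (rule d_frob[OF nav rpos ggc[OF b] ch])
      show ?thesis unfolding x tm_def
        using d_smul_frob[OF nav rpos monc(1) monc(2) G dG] car_mult[OF nav rpos monc(1) G] by simp
    qed
    have z: "(\<lambda>_. 0) \<in> (poly_set :: ('n, 'a) pser set)" by (simp add: poly_set_def)
    have sum_ok: "fdelta (tate_ring v r) (\<lambda>\<nu>. \<Sum>x\<in>J \<times> B. tm x \<nu>) \<in> kahler_rel (tate_ring v r) poly_set"
    proof -
      have "finite (J \<times> B)" using finJ B(1) by simp
      from d_sum[OF nav rpos this tm_ok z] show ?thesis by (rule conjunct2)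
    qed
    have feq: "f = (\<lambda>\<nu>. \<Sum>x\<in>J \<times> B. tm x \<nu>)"
    proof
      fix \<nu> :: "'n \<Rightarrow> nat"
      define j0 where "j0 = (\<lambda>i. \<nu> i mod p)"
      have j0J: "j0 \<in> J" unfolding j0_def J_def using pp by simp
      have tmv: "tm (j, b) \<nu> = (if j = j0 then rep (f \<nu>) b ^ p * b else 0)" if j: "j \<in> J" for j b
      proof -
        have jl: "\<forall>i. j i < p" using j unfolding J_def by simp
        have "tm (j, b) \<nu> = (if (\<forall>i. j i \<le> \<nu> i) then b * ppow (gg (j, b)) p (\<lambda>i. \<nu> i - j i) else 0)"
          unfolding tm_def mon_def by (simp add: pser_mult_mono_left)
        also have "\<dots> = (if (\<forall>i. j i \<le> \<nu> i) \<and> (\<forall>i. p dvd (\<nu> i - j i))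
              then b * gg (j, b) (\<lambda>i. (\<nu> i - j i) div p) ^ p else 0)"
          by (simp add: ppow_frob[OF ch p_def])
        also have "\<dots> = (if j = j0 then b * gg (j, b) (\<lambda>i. (\<nu> i - j i) div p) ^ p else 0)"
          unfolding j0_def using decomp_coeff[OF pp jl, of \<nu>] by simp
        also have "\<dots> = (if j = j0 then rep (f \<nu>) b ^ p * b else 0)"
        proof (cases "j = j0")
          case True
          have "(\<lambda>i. p * ((\<nu> i - j i) div p) + j i) = \<nu>"
            unfolding True j0_def using pp by (simp add: minus_mod_eq_mult_div)
          then show ?thesis using True by (simp add: gg_def mult.commute)
        qed simp
        finally show ?thesis .
      qed
      have "(\<Sum>x\<in>J \<times> B. tm x \<nu>) = (\<Sum>j\<in>J. \<Sum>b\<in>B. tm (j, b) \<nu>)"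
        unfolding sum.cartesian_product by (rule sum.cong) auto
      also have "\<dots> = (\<Sum>j\<in>J. if j = j0 then (\<Sum>b\<in>B. rep (f \<nu>) b ^ p * b) else 0)"
        by (rule sum.cong) (simp_all add: tmv)
      also have "\<dots> = (\<Sum>b\<in>B. rep (f \<nu>) b ^ p * b)"
        using j0J finJ by (simp add: sum.delta')
      also have "\<dots> = f \<nu>" using rep(1)[of "f \<nu>"] by simp
      finally show "f \<nu> = (\<Sum>x\<in>J \<times> B. tm x \<nu>)" by simp
    qed
    show "fdelta (tate_ring v r) f \<in> kahler_rel (tate_ring v r) poly_set"
      using sum_ok feq by simp
  qed
qed


end
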